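(* $\bigcup_{\sigma>0}\mathcal{C}(\sigma)\subsetneqq C^\infty([0,L]^2;\mathbb{R}^2)\cap H$.
   Context: $H$ is the closure in $L^2([0,L]^2)^2$ of the $\mathbb{R}^2$-valued $[0,L]^2$-periodic trigonometric polynomials $v$ with $\nabla\cdot v=0$ and $\int v\,dx=0$, with norm $|\cdot|$; $A=-\Delta$ is the Stokes operator with spectrally defined powers $A^{\alpha/2}$. Fix $\nu>0$ and $\kappa_0=2\pi/L$. For $\sigma>0$, $\mathcal{C}(\sigma)$ is the set of $u\in C^\infty([0,L]^2)\cap H$ for which there is $c_0=c_0(u)\in\mathbb{R}$ with $\frac{|A^{\alpha/2}u|^2}{\nu^2\kappa_0^{2\alpha}}\le c_0e^{\sigma\alpha^2}$ for all $\alpha\in\mathbb{N}$. *)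

theory Defs
  imports "HOL-Analysis.Analysis"
begin

inductive_set partials :: "(real^2 \<Rightarrow> real) \<Rightarrow> (real^2 \<Rightarrow> real) set" for f where
  base: "f \<in> partials f"
| step: "g \<in> partials f \<Longrightarrow>
         (\<And>x. ((\<lambda>t. g (x + t *\<^sub>R axis i 1)) has_real_derivative h x) (at 0))
         \<Longrightarrow> h \<in> partials f"

definition smooth_fun :: "(real^2 \<Rightarrow> real) \<Rightarrow> bool" where
  "smooth_fun f \<longleftrightarrow> (\<forall>g\<in>partials f. continuous_on UNIV g \<and>
      (\<forall>i x. \<exists>d. ((\<lambda>t. g (x + t *\<^sub>R axis i 1)) has_real_derivative d) (at 0)))"

definition periodic_field :: "real \<Rightarrow> (real^2 \<Rightarrow> real^2) \<Rightarrow> bool" where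
  "periodic_field L u \<longleftrightarrow> (\<forall>x i. u (x + L *\<^sub>R axis i 1) = u x)"

definition smooth_periodic_field :: "real \<Rightarrow> (real^2 \<Rightarrow> real^2) \<Rightarrow> bool" where
  "smooth_periodic_field L u \<longleftrightarrow> periodic_field L u \<and> (\<forall>j. smooth_fun (\<lambda>x. u x $ j))"

definition kappa0 :: "real \<Rightarrow> real" where
  "kappa0 L = 2 * pi / L"

definition wavevec :: "int \<times> int \<Rightarrow> real^2" where
  "wavevec k = vector [real_of_int (fst k), real_of_int (snd k)]"

definition fcoef :: "real \<Rightarrow> (real^2 \<Rightarrow> real^2) \<Rightarrow> 2 \<Rightarrow> int \<times> int \<Rightarrow> complex" where
  "fcoef L u j k = complex_of_real (1 / L^2) *
     integral (cbox (0::real^2) (\<chi> i. L))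
       (\<lambda>x. complex_of_real (u x $ j) * cis (- kappa0 L * (wavevec k \<bullet> x)))"

text \<open>Membership in H (closure in L^2 of divergence-free, mean-zero trigonometric
  polynomials), expressed via Fourier coefficients: zero mean and k . u_hat(k) = 0.\<close>
definition in_H :: "real \<Rightarrow> (real^2 \<Rightarrow> real^2) \<Rightarrow> bool" where
  "in_H L u \<longleftrightarrow> (\<forall>j. fcoef L u j (0,0) = 0) \<and>
     (\<forall>k. complex_of_real (real_of_int (fst k)) * fcoef L u 1 k
          + complex_of_real (real_of_int (snd k)) * fcoef L u 2 k = 0)"

definition smoothH :: "real \<Rightarrow> (real^2 \<Rightarrow> real^2) set" where
  "smoothH L = {u. smooth_periodic_field L u \<and> in_H L u}"

text \<open>|A^{alpha/2} u|^2 with A = -Laplacian defined spectrally; by Parseval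
  |A^{alpha/2}u|^2 = L^2 * sum_k (kappa0^2 |k|^2)^alpha * |u_hat(k)|^2.\<close>
definition Apow_norm_sq :: "real \<Rightarrow> nat \<Rightarrow> (real^2 \<Rightarrow> real^2) \<Rightarrow> real" where
  "Apow_norm_sq L \<alpha> u = L^2 * (\<Sum>\<^sub>\<infinity>k\<in>(UNIV :: (int\<times>int) set).
      (kappa0 L * norm (wavevec k)) ^ (2 * \<alpha>) *
      (\<Sum>j\<in>UNIV. (cmod (fcoef L u j k))^2))"

definition Cclass :: "real \<Rightarrow> real \<Rightarrow> real \<Rightarrow> (real^2 \<Rightarrow> real^2) set" where
  "Cclass L \<nu> \<sigma> = {u \<in> smoothH L. \<exists>c0::real. \<forall>\<alpha>::nat.
      Apow_norm_sq L \<alpha> u / (\<nu>^2 * kappa0 L ^ (2 * \<alpha>))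
        \<le> c0 * exp (\<sigma> * (real \<alpha>)^2)}"

end

theory Submission
  imports Defs
begin


definition bb :: "nat \<Rightarrow> real" where
  "bb n = (if n = 0 then 0 else exp (- ln (real n) * sqrt (ln (real n))))"

lemma bb_nonneg: "bb n \<ge> 0" by (simp add: bb_def)

lemma bb_bound:
  assumes "real n \<ge> exp ((real p + 2)^2)"
  shows "bb n * real n ^ p \<le> 1 / real n ^ 2"
proof -
  have n1: "real n \<ge> 1" using assms by (smt (verit) one_le_exp_iff zero_le_power2)
  hence npos: "real n > 0" by simp
  have "ln (real n) \<ge> (real p + 2)^2" using assms npos
    by (metis exp_gt_zero ln_exp ln_le_cancel_iff)
  hence sq: "sqrt (ln (real n)) \<ge> real p + 2"
    by (metis abs_of_nonneg add_nonneg_nonneg of_nat_0_le_iff real_sqrt_abs real_sqrt_le_mono zero_le_numeral)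
  have ln0: "ln (real n) \<ge> 0" using n1 by simp
  have "bb n * real n ^ p = exp (- ln (real n) * sqrt (ln (real n)) + real p * ln (real n))"
  proof -
    have "real n ^ p = exp (real p * ln (real n))"
      using npos by (simp add: exp_of_nat_mult)
    thus ?thesis using npos n1 by (simp add: bb_def exp_add[symmetric] algebra_simps)
  qed
  also have "\<dots> \<le> exp (- 2 * ln (real n))"
  proof -
    have "ln (real n) * (real p + 2) \<le> ln (real n) * sqrt (ln (real n))"
      using sq ln0 by (intro mult_left_mono) auto
    thus ?thesis by (simp add: algebra_simps)
  qed
  also have "\<dots> = 1 / real n ^ 2"
  proof -
    have "exp (2 * ln (real n)) = (real n)^2"
      using exp_of_nat_mult[of 2 "ln (real n)"] npos by simp
    thus ?thesis using npos by (simp add: exp_minus field_simps)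
  qed
  finally show ?thesis .
qed

lemma bb_summable: "summable (\<lambda>n. bb n * real n ^ p)"
proof (rule summable_comparison_test_ev)
  show "summable (\<lambda>n. 1 / real n ^ 2)"
    using inverse_power_summable[of 2] by (simp add: divide_inverse)
  show "\<forall>\<^sub>F n in sequentially. norm (bb n * real n ^ p) \<le> 1 / real n ^ 2"
  proof -
    obtain N :: nat where N: "real N \<ge> exp ((real p + 2)^2)" using real_arch_simple by blast
    show ?thesis unfolding eventually_sequentially
      using bb_bound N bb_nonneg
      by (intro exI[of _ N]) (auto intro!: order.trans[OF _ of_nat_mono])
  qed
qed



definition trm :: "real \<Rightarrow> nat \<Rightarrow> nat \<Rightarrow> real \<Rightarrow> real" where
  "trm c p n t = bb n * (c * real n) ^ p * cos (c * real n * t + real p * pi / 2)"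

definition DD :: "real \<Rightarrow> nat \<Rightarrow> real \<Rightarrow> real" where
  "DD c p t = (\<Sum>n. trm c p n t)"

lemma trm_bound: "norm (trm c p n t) \<le> \<bar>c\<bar> ^ p * (bb n * real n ^ p)"
proof -
  have "norm (trm c p n t) = bb n * (\<bar>c\<bar> * real n) ^ p * \<bar>cos (c * real n * t + real p * pi / 2)\<bar>"
    by (simp add: trm_def abs_mult power_abs bb_nonneg)
  also have "\<dots> \<le> bb n * (\<bar>c\<bar> * real n) ^ p * 1"
    by (intro mult_left_mono) (auto simp: bb_nonneg)
  finally show ?thesis by (simp add: power_mult_distrib algebra_simps)
qed

lemma trm_summable_M: "summable (\<lambda>n. \<bar>c\<bar> ^ p * (bb n * real n ^ p))"
  using bb_summable by (rule summable_mult)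

lemma trm_summable: "summable (\<lambda>n. trm c p n t)"
  apply (rule summable_norm_cancel, rule summable_comparison_test[OF _ trm_summable_M[where c=c and p=p]])
  apply (rule exI[of _ 0])
  using trm_bound[of c p _ t] by simp

lemma trm_deriv: "(trm c p n has_real_derivative trm c (Suc p) n t) (at t)"
proof -
  have "((\<lambda>t. bb n * (c * real n) ^ p * cos (c * real n * t + real p * pi / 2)) has_real_derivative
        bb n * (c * real n) ^ p * (- sin (c * real n * t + real p * pi / 2) * (c * real n))) (at t)"
    by (auto intro!: derivative_eq_intros)
  moreover have "bb n * (c * real n) ^ p * (- sin (c * real n * t + real p * pi / 2) * (c * real n))
     = trm c (Suc p) n t"
  proof -
    have h: "c * real n * t + real (Suc p) * pi / 2 = (c * real n * t + real p * pi / 2) + pi / 2" by (simp add: field_simps)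
    have "cos (c * real n * t + real (Suc p) * pi / 2) = - sin (c * real n * t + real p * pi / 2)"
      by (simp only: h) (simp add: cos_add)
    thus ?thesis unfolding trm_def by (simp add: algebra_simps)
  qed
  ultimately show ?thesis unfolding trm_def[abs_def] by simp
qed

lemma DD_deriv: "(DD c p has_real_derivative DD c (Suc p) t) (at t)"
proof -
  have uc: "uniformly_convergent_on UNIV (\<lambda>n x. \<Sum>i<n. trm c (Suc p) i x)"
    by (rule Weierstrass_m_test'_ev[OF _ trm_summable_M[where c=c and p="Suc p"]])
     (rule always_eventually, use trm_bound in blast)
  have "((\<lambda>x. \<Sum>n. trm c p n x) has_field_derivative (\<Sum>n. trm c (Suc p) n t)) (at t)"
  proof (rule has_field_derivative_series'(2)[OF convex_UNIV _ uc])
    show "(trm c p n has_field_derivative trm c (Suc p) n x) (at x within UNIV)" if "x \<in> UNIV" for n x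
      using trm_deriv by blast
    show "summable (\<lambda>n. trm c p n 0)" by (rule trm_summable)
  qed auto
  thus ?thesis unfolding DD_def[abs_def] .
qed

lemma DD_cont: "continuous_on UNIV (DD c p)"
  using DD_deriv by (meson DERIV_isCont continuous_at_imp_continuous_on)

lemma cos_plus_nat: "cos (x + real n * (2 * pi)) = cos x"
proof (induction n)
  case (Suc n)
  have "x + real (Suc n) * (2 * pi) = (x + real n * (2 * pi)) + 2 * pi" by (simp add: algebra_simps)
  thus ?case using Suc cos_periodic[of "x + real n * (2 * pi)"] by (simp only: add.assoc)
qed simp

lemma DD_periodic:
  assumes "c * L = 2 * pi"
  shows "DD c p (t + L) = DD c p t"
proof -
  have "trm c p n (t + L) = trm c p n t" for n
  proof -
    have "c * real n * (t + L) + real p * pi / 2 = (c * real n * t + real p * pi / 2) + real n * (2 * pi)"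
      using assms by (simp add: algebra_simps)
    thus ?thesis unfolding trm_def by (simp only: cos_plus_nat)
  qed
  thus ?thesis unfolding DD_def by simp
qed



definition GS :: "real \<Rightarrow> (real^2 \<Rightarrow> real) set" where
  "GS c = {g. (\<exists>p. g = (\<lambda>x. DD c p (x $ 1))) \<or> g = (\<lambda>x. 0)}"

lemma axis_nth1: "(x + t *\<^sub>R axis i 1) $ (1::2) = x $ 1 + (if i = 1 then t else 0)"
  by (auto simp: axis_def)

lemma axis_1: "axis i (1::real) $ (1::2) = (if i = 1 then 1 else 0)"
  by (auto simp: axis_def)

lemma dir_deriv_DD:
  "((\<lambda>t. DD c p ((x + t *\<^sub>R axis i 1) $ 1)) has_real_derivative
      (if i = 1 then DD c (Suc p) (x $ 1) else 0)) (at 0)"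
proof (cases "i = 1")
  case True
  have "((\<lambda>t. DD c p (x $ 1 + t)) has_real_derivative DD c (Suc p) (x $ 1 + 0) * 1) (at 0)"
    by (rule DERIV_chain2[OF DD_deriv]) (auto intro!: derivative_eq_intros)
  then show ?thesis using True by (simp add: axis_nth1)
next
  case False
  then have "1 \<noteq> i" by auto
  then show ?thesis by (simp add: axis_def)
qed

lemma dir_deriv_zero:
  "((\<lambda>t. (\<lambda>x::real^2. 0::real) (x + t *\<^sub>R axis i 1)) has_real_derivative 0) (at 0)"
  by simp

lemma GS_closed:
  assumes g: "g \<in> GS c"
    and h: "\<And>x. ((\<lambda>t. g (x + t *\<^sub>R axis i 1)) has_real_derivative h x) (at 0)"
  shows "h \<in> GS c"
proof -
  from g consider p where "g = (\<lambda>x. DD c p (x $ 1))" | "g = (\<lambda>x. 0)" unfolding GS_def by blast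
  then show ?thesis
  proof cases
    case (1 p)
    have "h x = (if i = 1 then DD c (Suc p) (x $ 1) else 0)" for x
    proof -
      have "((\<lambda>t. DD c p ((x + t *\<^sub>R axis i 1) $ 1)) has_real_derivative h x) (at 0)"
        using h[of x] unfolding 1 .
      from DERIV_unique[OF this dir_deriv_DD[of c p x i]] show ?thesis .
    qed
    then have "h = (if i = 1 then (\<lambda>x. DD c (Suc p) (x $ 1)) else (\<lambda>x. 0))" by auto
    then show ?thesis unfolding GS_def by auto
  next
    case 2
    have "h x = 0" for x
    proof -
      have "((\<lambda>t. (\<lambda>x::real^2. 0::real) (x + t *\<^sub>R axis i 1)) has_real_derivative h x) (at 0)"
        using h[of x] unfolding 2 .
      from DERIV_unique[OF this DERIV_const] show ?thesis .
    qed
    then show ?thesis unfolding GS_def by auto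
  qed
qed

lemma partials_GS:
  assumes "f \<in> GS c" shows "partials f \<subseteq> GS c"
proof
  fix g assume "g \<in> partials f"
  then show "g \<in> GS c"
    by (induction rule: partials.induct) (use assms GS_closed in blast)+
qed

lemma GS_smooth:
  assumes "f \<in> GS c" shows "smooth_fun f"
  unfolding smooth_fun_def
proof
  fix g assume "g \<in> partials f"
  then have g: "g \<in> GS c" using partials_GS[OF assms] by blast
  then consider p where "g = (\<lambda>x. DD c p (x $ 1))" | "g = (\<lambda>x. 0)" unfolding GS_def by blast
  then show "continuous_on UNIV g \<and>
      (\<forall>i x. \<exists>d. ((\<lambda>t. g (x + t *\<^sub>R axis i 1)) has_real_derivative d) (at 0))"
  proof cases
    case (1 p)
    have "continuous_on UNIV (\<lambda>x::real^2. DD c p (x $ 1))"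
      by (rule continuous_on_compose2[OF DD_cont[of c p]]) (auto intro: continuous_intros)
    then show ?thesis using 1 dir_deriv_DD by blast
  next
    case 2
    then show ?thesis by (auto intro!: exI DERIV_const)
  qed
qed

definition uu :: "real \<Rightarrow> real^2 \<Rightarrow> real^2" where
  "uu L x = (\<chi> j. if j = 1 then 0 else DD (kappa0 L) 0 (x $ 1))"

lemma uu_smooth:
  assumes "L > 0"
  shows "smooth_periodic_field L (uu L)"
  unfolding smooth_periodic_field_def periodic_field_def
proof
  have kL: "kappa0 L * L = 2 * pi" using assms by (simp add: kappa0_def)
  show "\<forall>x i. uu L (x + L *\<^sub>R axis i 1) = uu L x"
  proof (intro allI)
    fix x :: "real^2" and i :: 2
    show "uu L (x + L *\<^sub>R axis i 1) = uu L x"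
      unfolding uu_def using DD_periodic[OF kL] by (auto simp: axis_1 vec_eq_iff)
  qed
  show "\<forall>j. smooth_fun (\<lambda>x. uu L x $ j)"
  proof
    fix j :: 2
    show "smooth_fun (\<lambda>x. uu L x $ j)"
    proof (cases "j = 1")
      case True
      then show ?thesis using GS_smooth[of "\<lambda>x. 0" "kappa0 L"] by (simp add: uu_def GS_def)
    next
      case False
      then show ?thesis using GS_smooth[of "\<lambda>x. DD (kappa0 L) 0 (x $ 1)" "kappa0 L"]
        by (auto simp: uu_def GS_def)
    qed
  qed
qed



lemma int_cis:
  fixes c L :: real and m :: int
  assumes L: "L > 0" and cL: "c * L = 2 * pi"
  shows "((\<lambda>y. cis (c * of_int m * y)) has_integral (if m = 0 then complex_of_real L else 0)) {0..L}"
proof (cases "m = 0")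
  case True
  then show ?thesis using has_integral_const_real[of "1::complex" 0 L] L
    by (simp add: scaleR_conv_of_real)
next
  case False
  define a where "a = \<i> * complex_of_real (c * of_int m)"
  have c0: "c \<noteq> 0" using cL by auto
  have a0: "a \<noteq> 0" using False c0 by (simp add: a_def)
  define G where "G x = exp (a * complex_of_real x) / a" for x
  have eq: "cis (c * of_int m * y) = exp (a * complex_of_real y)" for y
    by (simp add: a_def cis_conv_exp mult.assoc)
  have d: "(G has_vector_derivative exp (a * complex_of_real y)) (at y within {0..L})" for y
  proof -
    have "((\<lambda>z. exp (a * z) / a) has_field_derivative exp (a * of_real y)) (at (of_real y))"
      using a0 by (auto intro!: derivative_eq_intros)
    from has_vector_derivative_real_field[OF this] show ?thesis unfolding G_def .
  qed
  have "((\<lambda>y. exp (a * complex_of_real y)) has_integral (G L - G 0)) {0..L}"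
    by (rule fundamental_theorem_of_calculus) (use L d in auto)
  moreover have "G L = G 0"
  proof -
    have "a * complex_of_real L = \<i> * complex_of_real (2 * pi * of_int m)"
      using cL by (simp add: a_def algebra_simps flip: of_real_mult)
    hence "exp (a * complex_of_real L) = cis (2 * pi * of_int m)"
      by (simp add: cis_conv_exp)
    also have "\<dots> = 1" by simp
    finally show ?thesis by (simp add: G_def)
  qed
  ultimately show ?thesis using False by (simp add: eq)
qed



definition vec2 :: "real \<Rightarrow> real \<Rightarrow> real^2" where
  "vec2 x y = (\<chi> i. if i = 1 then x else y)"

lemma vec2_nth [simp]: "vec2 x y $ 1 = x" "vec2 x y $ 2 = y"
  by (simp_all add: vec2_def)

lemma vec2_eta: "vec2 (z $ 1) (z $ 2) = z"
  by (simp add: vec_eq_iff forall_2)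

lemma mem_cbox2: "z \<in> cbox u v \<longleftrightarrow> u$1 \<le> z$1 \<and> z$1 \<le> v$1 \<and> u$2 \<le> z$2 \<and> z$2 \<le> v$2"
  for z u v :: "real^2"
  by (auto simp: mem_box_cart forall_2)

lemma g_image:
  "(\<lambda>p. vec2 (fst p) (snd p)) ` cbox u v = cbox (vec2 (fst u) (snd u)) (vec2 (fst v) (snd v))"
proof -
  obtain u1 u2 v1 v2 where uv: "u = (u1, u2)" "v = (v1, v2)" by (cases u, cases v) auto
  show ?thesis
  proof (rule set_eqI)
    fix z :: "real^2"
    have "z \<in> (\<lambda>p. vec2 (fst p) (snd p)) ` cbox u v \<longleftrightarrow> (z$1, z$2) \<in> cbox u v"
    proof
      assume "z \<in> (\<lambda>p. vec2 (fst p) (snd p)) ` cbox u v"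
      then show "(z$1, z$2) \<in> cbox u v" by auto
    next
      assume "(z$1, z$2) \<in> cbox u v"
      then show "z \<in> (\<lambda>p. vec2 (fst p) (snd p)) ` cbox u v"
        by (intro image_eqI[of _ _ "(z$1, z$2)"]) (auto simp: vec2_eta)
    qed
    also have "\<dots> \<longleftrightarrow> z \<in> cbox (vec2 (fst u) (snd u)) (vec2 (fst v) (snd v))"
      unfolding uv cbox_Pair_eq mem_cbox2 by auto
    finally show "z \<in> (\<lambda>p. vec2 (fst p) (snd p)) ` cbox u v \<longleftrightarrow> z \<in> cbox (vec2 (fst u) (snd u)) (vec2 (fst v) (snd v))" .
  qed
qed

lemma h_image:
  "(\<lambda>z::real^2. (z$1, z$2)) ` cbox u v = cbox (u$1, u$2) (v$1, v$2)"
proof (rule set_eqI)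
  fix p :: "real \<times> real"
  obtain p1 p2 where p: "p = (p1, p2)" by (cases p) auto
  show "p \<in> (\<lambda>z::real^2. (z$1, z$2)) ` cbox u v \<longleftrightarrow> p \<in> cbox (u$1, u$2) (v$1, v$2)"
  proof
    assume "p \<in> (\<lambda>z::real^2. (z$1, z$2)) ` cbox u v"
    then show "p \<in> cbox (u$1, u$2) (v$1, v$2)" by (auto simp: cbox_Pair_eq mem_cbox2)
  next
    assume "p \<in> cbox (u$1, u$2) (v$1, v$2)"
    then show "p \<in> (\<lambda>z::real^2. (z$1, z$2)) ` cbox u v"
      unfolding p by (intro image_eqI[of _ _ "vec2 p1 p2"]) (auto simp: cbox_Pair_eq mem_cbox2)
  qed
qed

lemma content_g:
  "Henstock_Kurzweil_Integration.content ((\<lambda>p. vec2 (fst p) (snd p)) ` cbox u v) = 1 * Henstock_Kurzweil_Integration.content (cbox u v)"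
proof -
  obtain u1 u2 v1 v2 where uv: "u = (u1, u2)" "v = (v1, v2)" by (cases u, cases v) auto
  have e: "cbox (vec2 u1 u2) (vec2 v1 v2) = {} \<longleftrightarrow> \<not> (u1 \<le> v1 \<and> u2 \<le> v2)"
    by (auto simp: mem_cbox2 set_eq_iff dest: spec[of _ "vec2 u1 u2"])
  show ?thesis unfolding g_image uv
    apply (simp add: content_cbox_if_cart content_Pair UNIV_2 content_real_if)
    using e by auto
qed

lemma cont_g: "continuous_on UNIV (\<lambda>p::real\<times>real. vec2 (fst p) (snd p))"
  unfolding vec2_def
proof (intro continuous_on_vec_lambda)
  fix i :: 2
  show "continuous_on UNIV (\<lambda>p::real\<times>real. if i = 1 then fst p else snd p)"
    by (cases "i = 1") (auto intro: continuous_intros)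
qed

lemma integral_2D:
  fixes F :: "real^2 \<Rightarrow> complex"
  assumes cont: "continuous_on UNIV F"
  shows "integral (cbox 0 (\<chi> i. L)) F = integral {0..L} (\<lambda>x. integral {0..L} (\<lambda>y. F (vec2 x y)))"
proof -
  have intF: "(F has_integral integral (cbox 0 (\<chi> i. L)) F) (cbox 0 (\<chi> i. L))"
    by (rule integrable_integral, rule integrable_continuous, rule continuous_on_subset[OF cont]) auto
  have "((\<lambda>p. F (vec2 (fst p) (snd p))) has_integral (1 / 1) *\<^sub>R integral (cbox 0 (\<chi> i. L)) F)
          ((\<lambda>z::real^2. (z$1, z$2)) ` cbox 0 (\<chi> i. L))"
  proof (rule has_integral_twiddle[OF _ _ _ _ _ _ content_g intF])
    show "\<And>x::real\<times>real. (\<lambda>z::real^2. (z$1, z$2)) (vec2 (fst x) (snd x)) = x" by auto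
    show "\<And>x::real^2. vec2 (fst (x$1, x$2)) (snd (x$1, x$2)) = x" by (simp add: vec2_eta)
    show "\<And>x. continuous (at x) (\<lambda>p. vec2 (fst p) (snd p))"
      using cont_g continuous_on_eq_continuous_at open_UNIV by blast
    show "\<And>u v. \<exists>w z. (\<lambda>p. vec2 (fst p) (snd p)) ` cbox u v = cbox w z" using g_image by blast
    show "\<And>u v. \<exists>w z. (\<lambda>z::real^2. (z$1, z$2)) ` cbox u v = cbox w z" using h_image by blast
  qed simp
  then have "((\<lambda>p. F (vec2 (fst p) (snd p))) has_integral integral (cbox 0 (\<chi> i. L)) F)
          (cbox (0::real, 0::real) (L, L))"
    by (simp add: h_image)
  then have "integral (cbox 0 (\<chi> i. L)) F = integral (cbox (0::real, 0::real) (L, L)) (\<lambda>p. F (vec2 (fst p) (snd p)))"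
    by (simp add: integral_unique)
  also have "\<dots> = integral (cbox 0 L) (\<lambda>x. integral (cbox 0 L) (\<lambda>y. F (vec2 x y)))"
    by (subst integral_prod_continuous)
       (rule continuous_on_compose2[OF cont continuous_on_subset[OF cont_g]], auto)
  finally show ?thesis by simp
qed



lemma cos_as_cis: "complex_of_real (cos t) = (cis t + cis (- t)) / 2"
  by (simp add: complex_eq_iff)

lemma int_cos_cis:
  fixes c L :: real and m :: int
  assumes L: "L > 0" and cL: "c * L = 2 * pi"
  shows "((\<lambda>x. complex_of_real (cos (c * real n * x)) * cis (c * of_int m * x)) has_integral
     ((if int n + m = 0 then complex_of_real L else 0) + (if m - int n = 0 then complex_of_real L else 0)) / 2) {0..L}"
proof -
  have eq: "complex_of_real (cos (c * real n * x)) * cis (c * of_int m * x)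
     = (cis (c * of_int (int n + m) * x) + cis (c * of_int (m - int n) * x)) / 2" for x
    unfolding cos_as_cis by (simp add: cis_mult algebra_simps add_divide_distrib)
  have "((\<lambda>x. cis (c * of_int (int n + m) * x) + cis (c * of_int (m - int n) * x)) has_integral
     ((if int n + m = 0 then complex_of_real L else 0) + (if m - int n = 0 then complex_of_real L else 0))) {0..L}"
    by (intro has_integral_add int_cis[OF L cL])
  from has_integral_mult_right[OF this, of "1/2"] show ?thesis
    unfolding eq by simp
qed

lemma cont_f1: "continuous_on UNIV (\<lambda>x::real^2. DD c p (x $ 1))"
  by (rule continuous_on_compose2[OF DD_cont[of c p]]) (auto intro: continuous_intros)

lemma DD0_eq: "DD c 0 t = (\<Sum>n. bb n * cos (c * real n * t))"
  unfolding DD_def trm_def by simp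

lemma J_int:
  fixes c L :: real and k :: int
  assumes L: "L > 0" and cL: "c * L = 2 * pi"
  shows "integral {0..L} (\<lambda>x. complex_of_real (DD c 0 x) * cis (c * of_int (- k) * x))
     = complex_of_real (bb (nat \<bar>k\<bar>) * L / 2)"
proof -
  define tm where "tm n x = complex_of_real (bb n * cos (c * real n * x)) * cis (c * of_int (- k) * x)" for n x
  have bnd: "norm (tm n x) \<le> \<bar>c\<bar> ^ 0 * (bb n * real n ^ 0)" for n x
    using trm_bound[of c 0 n x] by (simp add: tm_def trm_def norm_mult)
  have ul: "uniform_limit {0..L} (\<lambda>N x. \<Sum>i<N. tm i x) (\<lambda>x. suminf (\<lambda>i. tm i x)) sequentially"
    by (rule Weierstrass_m_test[OF _ trm_summable_M[where c=c and p=0]]) (rule bnd)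
  have sumeq: "suminf (\<lambda>i. tm i x) = complex_of_real (DD c 0 x) * cis (c * of_int (- k) * x)" for x
  proof -
    have s: "summable (\<lambda>n. bb n * cos (c * real n * x))"
      using trm_summable[of c 0 x] by (simp add: trm_def)
    have "suminf (\<lambda>i. tm i x) = (\<Sum>i. complex_of_real (bb i * cos (c * real i * x))) * cis (c * of_int (- k) * x)"
      unfolding tm_def by (rule suminf_mult2[symmetric]) (use summable_of_real[OF s] in simp)
    also have "(\<Sum>i. complex_of_real (bb i * cos (c * real i * x))) = complex_of_real (DD c 0 x)"
      unfolding DD0_eq by (rule suminf_of_real[OF s, symmetric])
    finally show ?thesis .
  qed
  have cont: "continuous_on {0..L} (\<lambda>x. \<Sum>i<N. tm i x)" for N
    unfolding tm_def by (auto intro!: continuous_intros)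
  obtain I J where I: "\<And>N. ((\<lambda>x. \<Sum>i<N. tm i x) has_integral I N) {0..L}"
    and J: "((\<lambda>x. suminf (\<lambda>i. tm i x)) has_integral J) {0..L}"
    and lim: "I \<longlonglongrightarrow> J"
    by (rule uniform_limit_integral[OF ul cont]) auto
  define V where "V n = complex_of_real (bb n) * (((if int n + - k = 0 then complex_of_real L else 0)
     + (if - k - int n = 0 then complex_of_real L else 0)) / 2)" for n
  have tmi: "(tm n has_integral V n) {0..L}" for n
  proof -
    have e: "tm n = (\<lambda>x. complex_of_real (bb n) * (complex_of_real (cos (c * real n * x)) * cis (c * of_int (- k) * x)))"
      by (auto simp: tm_def)
    show ?thesis unfolding e V_def
      by (rule has_integral_mult_right, rule int_cos_cis[OF L cL])
  qed
  have IN: "I N = (\<Sum>i<N. V i)" for N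
    by (rule has_integral_unique[OF I has_integral_sum]) (auto intro: tmi)
  have Vz: "V n = 0" if "n \<noteq> nat \<bar>k\<bar>" for n
  proof -
    have "int n + - k \<noteq> 0" "- k - int n \<noteq> 0" using that by auto
    then show ?thesis by (simp add: V_def)
  qed
  have Vk: "V (nat \<bar>k\<bar>) = complex_of_real (bb (nat \<bar>k\<bar>) * L / 2)"
  proof (cases "k = 0")
    case True then show ?thesis by (simp add: V_def bb_def)
  next
    case False
    show ?thesis
    proof (cases "k > 0")
      case True
      then have "int (nat \<bar>k\<bar>) = k" by simp
      then show ?thesis using True by (simp add: V_def)
    next
      case F2: False
      then have "int (nat \<bar>k\<bar>) = - k" by simp
      then show ?thesis using F2 False by (simp add: V_def)
    qed
  qed
  have "eventually (\<lambda>N. I N = complex_of_real (bb (nat \<bar>k\<bar>) * L / 2)) sequentially"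
    unfolding eventually_sequentially
  proof (intro exI[of _ "Suc (nat \<bar>k\<bar>)"] allI impI)
    fix N assume N: "Suc (nat \<bar>k\<bar>) \<le> N"
    have "I N = (\<Sum>i<N. V i)" by (rule IN)
    also have "\<dots> = V (nat \<bar>k\<bar>) + (\<Sum>i\<in>{..<N} - {nat \<bar>k\<bar>}. V i)"
      by (rule sum.remove) (use N in auto)
    also have "(\<Sum>i\<in>{..<N} - {nat \<bar>k\<bar>}. V i) = 0"
      by (rule sum.neutral) (use Vz in auto)
    finally show "I N = complex_of_real (bb (nat \<bar>k\<bar>) * L / 2)" using Vk by simp
  qed
  then have "I \<longlonglongrightarrow> complex_of_real (bb (nat \<bar>k\<bar>) * L / 2)"
    by (rule tendsto_eventually)
  with lim have "J = complex_of_real (bb (nat \<bar>k\<bar>) * L / 2)" using LIMSEQ_unique by blast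
  with J show ?thesis unfolding sumeq by (simp add: integral_unique)
qed



lemma uu1: "uu L x $ 1 = 0" by (simp add: uu_def)
lemma uu2: "uu L x $ 2 = DD (kappa0 L) 0 (x $ 1)" by (simp add: uu_def)

lemma fcoef1: "fcoef L (uu L) 1 k = 0"
  by (simp add: fcoef_def uu1)

lemma wave_vec2: "wavevec k \<bullet> vec2 x y = of_int (fst k) * x + of_int (snd k) * y"
  by (simp add: wavevec_def inner_vec_def UNIV_2)

lemma fcoef2:
  assumes L: "L > 0"
  shows "fcoef L (uu L) 2 k = (if snd k = 0 then complex_of_real (bb (nat \<bar>fst k\<bar>) / 2) else 0)"
proof -
  define c where "c = kappa0 L"
  have cL: "c * L = 2 * pi" using L by (simp add: c_def kappa0_def)
  define F where "F x = complex_of_real (DD c 0 (x $ 1)) * cis (- c * (wavevec k \<bullet> x))" for x :: "real^2"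
  have contF: "continuous_on UNIV F"
    unfolding F_def
    by (intro continuous_intros continuous_on_compose2[OF DD_cont[of c 0], of UNIV "\<lambda>x::real^2. x $ 1"])
       auto
  have Fv: "F (vec2 x y) = complex_of_real (DD c 0 x) * cis (c * of_int (- fst k) * x) * cis (c * of_int (- snd k) * y)" for x y
    unfolding F_def wave_vec2 by (simp add: cis_mult algebra_simps)
  have inner: "integral {0..L} (\<lambda>y. F (vec2 x y)) =
      complex_of_real (DD c 0 x) * cis (c * of_int (- fst k) * x) * (if snd k = 0 then complex_of_real L else 0)" for x
    unfolding Fv integral_mult_right using integral_unique[OF int_cis[OF L cL, of "- snd k"]] by simp
  have "fcoef L (uu L) 2 k = complex_of_real (1 / L^2) * integral (cbox 0 (\<chi> i. L)) F"
    unfolding fcoef_def uu2 F_def c_def ..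
  also have "\<dots> = complex_of_real (1 / L^2) * integral {0..L} (\<lambda>x. integral {0..L} (\<lambda>y. F (vec2 x y)))"
    using integral_2D[OF contF] by simp
  also have "\<dots> = (if snd k = 0 then complex_of_real (bb (nat \<bar>fst k\<bar>) / 2) else 0)"
  proof (cases "snd k = 0")
    case True
    have "integral {0..L} (\<lambda>x. integral {0..L} (\<lambda>y. F (vec2 x y)))
        = integral {0..L} (\<lambda>x. complex_of_real (DD c 0 x) * cis (c * of_int (- fst k) * x)) * complex_of_real L"
      unfolding inner using True by simp
    also have "\<dots> = complex_of_real (bb (nat \<bar>fst k\<bar>) * L / 2) * complex_of_real L"
      by (simp only: J_int[OF L cL])
    finally show ?thesis using True L by (simp add: power2_eq_square field_simps flip: of_real_mult)
  next
    case False
    then show ?thesis unfolding inner by simp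
  qed
  finally show ?thesis .
qed



lemma sum_int_half:
  fixes g :: "nat \<Rightarrow> real" and F :: "(int \<times> int) set"
  assumes g0: "\<And>n. g n \<ge> 0" and sg: "summable g" and fin: "finite F"
    and P: "\<And>k. k \<in> F \<Longrightarrow> Q k \<Longrightarrow> snd k = 0"
    and inj: "inj_on (\<lambda>k. nat \<bar>fst k\<bar>) {k \<in> F. Q k}"
  shows "(\<Sum>k\<in>{k \<in> F. Q k}. g (nat \<bar>fst k\<bar>)) \<le> suminf g"
proof -
  have "(\<Sum>k\<in>{k \<in> F. Q k}. g (nat \<bar>fst k\<bar>)) = (\<Sum>n\<in>(\<lambda>k. nat \<bar>fst k\<bar>) ` {k \<in> F. Q k}. g n)"
    by (rule sum.reindex[OF inj, symmetric, unfolded comp_def])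
  also have "\<dots> \<le> suminf g"
    by (rule sum_le_suminf[OF sg]) (use fin g0 in auto)
  finally show ?thesis .
qed

lemma summable_on_int2:
  fixes g :: "nat \<Rightarrow> real"
  assumes g0: "\<And>n. g n \<ge> 0" and sg: "summable g"
  shows "(\<lambda>k::int\<times>int. if snd k = 0 then g (nat \<bar>fst k\<bar>) else 0) summable_on UNIV"
proof (rule nonneg_bdd_above_summable_on)
  show "\<And>x. x \<in> UNIV \<Longrightarrow> 0 \<le> (if snd x = 0 then g (nat \<bar>fst x\<bar>) else 0)" using g0 by auto
  show "bdd_above (sum (\<lambda>k::int\<times>int. if snd k = 0 then g (nat \<bar>fst k\<bar>) else 0) ` {F. F \<subseteq> UNIV \<and> finite F})"
  proof (rule bdd_aboveI2)
    fix F :: "(int \<times> int) set" assume "F \<in> {F. F \<subseteq> UNIV \<and> finite F}"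
    then have fin: "finite F" by auto
    let ?G = "\<lambda>k::int\<times>int. if snd k = 0 then g (nat \<bar>fst k\<bar>) else 0"
    have "sum ?G F = sum ?G {k \<in> F. snd k = 0 \<and> fst k \<ge> 0} + sum ?G {k \<in> F. snd k = 0 \<and> fst k < 0}
        + sum ?G {k \<in> F. snd k \<noteq> 0}"
    proof -
      have "F = ({k \<in> F. snd k = 0 \<and> fst k \<ge> 0} \<union> {k \<in> F. snd k = 0 \<and> fst k < 0}) \<union> {k \<in> F. snd k \<noteq> 0}"
        by auto
      then have "sum ?G F = sum ?G (({k \<in> F. snd k = 0 \<and> fst k \<ge> 0} \<union> {k \<in> F. snd k = 0 \<and> fst k < 0}) \<union> {k \<in> F. snd k \<noteq> 0})"
        by simp
      also have "\<dots> = sum ?G ({k \<in> F. snd k = 0 \<and> fst k \<ge> 0} \<union> {k \<in> F. snd k = 0 \<and> fst k < 0}) + sum ?G {k \<in> F. snd k \<noteq> 0}"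
        by (rule sum.union_disjoint) (use fin in auto)
      also have "sum ?G ({k \<in> F. snd k = 0 \<and> fst k \<ge> 0} \<union> {k \<in> F. snd k = 0 \<and> fst k < 0})
         = sum ?G {k \<in> F. snd k = 0 \<and> fst k \<ge> 0} + sum ?G {k \<in> F. snd k = 0 \<and> fst k < 0}"
        by (rule sum.union_disjoint) (use fin in auto)
      finally show ?thesis .
    qed
    also have "sum ?G {k \<in> F. snd k \<noteq> 0} = 0" by (rule sum.neutral) auto
    also have "sum ?G {k \<in> F. snd k = 0 \<and> fst k \<ge> 0} = (\<Sum>k\<in>{k \<in> F. snd k = 0 \<and> fst k \<ge> 0}. g (nat \<bar>fst k\<bar>))"
      by (rule sum.cong) auto
    also have "sum ?G {k \<in> F. snd k = 0 \<and> fst k < 0} = (\<Sum>k\<in>{k \<in> F. snd k = 0 \<and> fst k < 0}. g (nat \<bar>fst k\<bar>))"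
      by (rule sum.cong) auto
    also have "(\<Sum>k\<in>{k \<in> F. snd k = 0 \<and> fst k \<ge> 0}. g (nat \<bar>fst k\<bar>)) \<le> suminf g"
      by (rule sum_int_half[OF g0 sg fin, of "\<lambda>k. snd k = 0 \<and> fst k \<ge> 0"])
         (auto simp: inj_on_def prod_eq_iff)
    also have "(\<Sum>k\<in>{k \<in> F. snd k = 0 \<and> fst k < 0}. g (nat \<bar>fst k\<bar>)) \<le> suminf g"
      by (rule sum_int_half[OF g0 sg fin, of "\<lambda>k. snd k = 0 \<and> fst k < 0"])
         (auto simp: inj_on_def prod_eq_iff)
    finally show "sum ?G F \<le> suminf g + suminf g" by simp
  qed
qed



lemma bb_le1: "bb n \<le> 1"
proof (cases "n = 0")
  case False
  then have "ln (real n) \<ge> 0" by simp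
  then have "- ln (real n) * sqrt (ln (real n)) \<le> 0" by simp
  then show ?thesis using False by (simp add: bb_def)
qed (simp add: bb_def)

lemma fcoef_norms:
  assumes L: "L > 0"
  shows "(\<Sum>j\<in>UNIV. (cmod (fcoef L (uu L) j k))^2) = (if snd k = 0 then (bb (nat \<bar>fst k\<bar>) / 2)^2 else 0)"
  using bb_nonneg[of "nat \<bar>fst k\<bar>"] by (simp add: UNIV_2 fcoef1 fcoef2[OF L])

lemma norm_wave0: "norm (wavevec (k1, 0)) = \<bar>real_of_int k1\<bar>"
  by (simp add: norm_eq_sqrt_inner wavevec_def inner_vec_def UNIV_2)

definition WW :: "real \<Rightarrow> nat \<Rightarrow> int \<times> int \<Rightarrow> real" where
  "WW L \<alpha> k = (kappa0 L * norm (wavevec k)) ^ (2 * \<alpha>) *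
      (\<Sum>j\<in>UNIV. (cmod (fcoef L (uu L) j k))^2)"

lemma WW_eq:
  assumes L: "L > 0"
  shows "WW L \<alpha> k = (if snd k = 0 then (kappa0 L * \<bar>real_of_int (fst k)\<bar>) ^ (2 * \<alpha>) * (bb (nat \<bar>fst k\<bar>) / 2)^2 else 0)"
proof (cases k)
  case (Pair k1 k2)
  then show ?thesis by (cases "k2 = 0") (auto simp: WW_def fcoef_norms[OF L] norm_wave0)
qed

lemma WW_nonneg:
  assumes L: "L > 0"
  shows "WW L \<alpha> k \<ge> 0"
  using L by (simp add: WW_eq[OF L] kappa0_def)

lemma WW_summable:
  assumes L: "L > 0"
  shows "WW L \<alpha> summable_on UNIV"
proof (rule summable_on_comparison_test)
  define c where "c = kappa0 L"
  have c0: "c > 0" using L by (simp add: c_def kappa0_def)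
  let ?g = "\<lambda>n. \<bar>c\<bar> ^ (2 * \<alpha>) * (bb n * real n ^ (2 * \<alpha>))"
  show "(\<lambda>k::int\<times>int. if snd k = 0 then ?g (nat \<bar>fst k\<bar>) else 0) summable_on UNIV"
    by (rule summable_on_int2[OF _ trm_summable_M]) (auto intro!: mult_nonneg_nonneg bb_nonneg)
  fix k :: "int \<times> int"
  show "0 \<le> WW L \<alpha> k" unfolding WW_def using L by (auto intro!: mult_nonneg_nonneg sum_nonneg simp: kappa0_def)
  show "WW L \<alpha> k \<le> (if snd k = 0 then ?g (nat \<bar>fst k\<bar>) else 0)"
  proof (cases "snd k = 0")
    case True
    have rn: "real (nat \<bar>fst k\<bar>) = \<bar>real_of_int (fst k)\<bar>" by simp
    have b: "(bb (nat \<bar>fst k\<bar>) / 2)^2 \<le> bb (nat \<bar>fst k\<bar>)"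
      using bb_nonneg[of "nat \<bar>fst k\<bar>"] bb_le1[of "nat \<bar>fst k\<bar>"]
      by (simp add: power2_eq_square mult_le_cancel_left1)
         (smt (verit, best) mult_left_le_one_le)
    have "WW L \<alpha> k = (c * \<bar>real_of_int (fst k)\<bar>) ^ (2 * \<alpha>) * (bb (nat \<bar>fst k\<bar>) / 2)^2"
      using True by (simp add: WW_eq[OF L] c_def)
    also have "\<dots> \<le> (c * \<bar>real_of_int (fst k)\<bar>) ^ (2 * \<alpha>) * bb (nat \<bar>fst k\<bar>)"
      by (rule mult_left_mono[OF b]) (use c0 in simp)
    also have "\<dots> = ?g (nat \<bar>fst k\<bar>)"
      unfolding rn using c0 by (simp add: power_mult_distrib)
    finally show ?thesis using True by simp
  next
    case False
    then show ?thesis by (simp add: WW_eq[OF L])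
  qed
qed

lemma Apow_lower:
  assumes L: "L > 0"
  shows "Apow_norm_sq L \<alpha> (uu L) \<ge> L^2 * ((kappa0 L * real n) ^ (2 * \<alpha>) * (bb n / 2)^2)"
proof -
  have "sum (WW L \<alpha>) {(int n, 0)} \<le> infsum (WW L \<alpha>) UNIV"
    by (rule finite_sum_le_infsum[OF WW_summable[OF L]]) (auto intro: WW_nonneg[OF L])
  then have "WW L \<alpha> (int n, 0) \<le> infsum (WW L \<alpha>) UNIV" by simp
  moreover have "WW L \<alpha> (int n, 0) = (kappa0 L * real n) ^ (2 * \<alpha>) * (bb n / 2)^2"
    by (simp add: WW_eq[OF L])
  moreover have "Apow_norm_sq L \<alpha> (uu L) = L^2 * infsum (WW L \<alpha>) UNIV"
    unfolding Apow_norm_sq_def WW_def ..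
  ultimately show ?thesis using L by simp
qed



definition aa :: real where "aa = 4 * ln 2 - 2 * ln 2 * sqrt (ln 2)"

lemma aa_pos: "aa > 0"
proof -
  have l: "0 < ln (2::real)" "ln (2::real) < 1" using ln_2_less_1 by auto
  then have "sqrt (ln 2) < 1" by simp
  then have "2 * ln 2 * sqrt (ln 2) < 2 * ln 2 * 1" using l by (intro mult_strict_left_mono) auto
  then show ?thesis unfolding aa_def using l by linarith
qed

lemma key_identity:
  "real (2 ^ (m * m)) ^ (2 * (2 * m)) * (bb (2 ^ (m * m)))^2 = exp (aa * real m ^ 3)"
proof -
  define N :: nat where "N = 2 ^ (m * m)"
  have Npos: "real N > 0" by (simp add: N_def)
  have lnN: "ln (real N) = real m * real m * ln 2"
    by (simp add: N_def ln_realpow)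
  have sq: "sqrt (real m * real m * ln 2) = real m * sqrt (ln 2)"
    by (simp add: real_sqrt_mult)
  have N0: "N \<noteq> 0" by (simp add: N_def)
  have p1: "real N ^ (2 * (2 * m)) = exp (real (2 * (2 * m)) * ln (real N))"
    using exp_of_nat_mult[of "2 * (2 * m)" "ln (real N)"] Npos by simp
  have p2: "(bb N)^2 = exp (2 * (- ln (real N) * sqrt (ln (real N))))"
  proof -
    have "bb N = exp (- ln (real N) * sqrt (ln (real N)))" using N0 by (simp add: bb_def)
    moreover have "exp (real 2 * (- ln (real N) * sqrt (ln (real N)))) = exp (- ln (real N) * sqrt (ln (real N))) ^ 2"
      by (rule exp_of_nat_mult)
    ultimately show ?thesis by simp
  qed
  have "real N ^ (2 * (2 * m)) * (bb N)^2 = exp (real (2 * (2 * m)) * ln (real N) + 2 * (- ln (real N) * sqrt (ln (real N))))"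
    unfolding p1 p2 by (simp only: exp_add)
  also have "real (2 * (2 * m)) * ln (real N) + 2 * (- ln (real N) * sqrt (ln (real N))) = aa * real m ^ 3"
  proof -
    have "real (2 * (2 * m)) = 4 * real m" by simp
    then show ?thesis unfolding lnN sq aa_def by (simp only:) (simp add: power3_eq_cube field_simps)
  qed
  finally show ?thesis unfolding N_def .
qed

lemma growth:
  fixes K c0 \<sigma> :: real
  assumes K: "K > 0"
  shows "\<exists>m::nat. K * exp (aa * real m ^ 3) > c0 * exp (\<sigma> * (real (2 * m))^2)"
proof -
  obtain m :: nat where m: "real m \<ge> (4 * \<bar>\<sigma>\<bar> + \<bar>c0\<bar> / K + 1) / aa + 1"
    using real_arch_simple by blast
  have m1: "real m \<ge> 1" using m aa_pos K
    by (smt (verit, ccfv_SIG) divide_nonneg_pos)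
  have "aa * real m \<ge> 4 * \<bar>\<sigma>\<bar> + \<bar>c0\<bar> / K + 1"
    using m aa_pos by (smt (verit, best) divide_le_eq mult.commute mult_le_cancel_left_pos)
  then have h: "aa * real m - 4 * \<sigma> \<ge> \<bar>c0\<bar> / K + 1" by linarith
  have mm: "real m * real m \<ge> 1" using m1 by (metis mult_ge1_I)
  have hp: "\<bar>c0\<bar> / K \<ge> 0" using K by simp
  have "(aa * real m - 4 * \<sigma>) * (real m * real m) \<ge> (\<bar>c0\<bar> / K + 1) * 1"
  proof -
    have nn: "aa * real m - 4 * \<sigma> \<ge> 0" using h hp by linarith
    show ?thesis by (intro mult_mono) (use nn mm h in auto)
  qed
  then have e: "aa * real m ^ 3 - \<sigma> * (real (2 * m))^2 \<ge> \<bar>c0\<bar> / K + 1"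
    by (simp add: algebra_simps power3_eq_cube power2_eq_square)
  have "exp (aa * real m ^ 3 - \<sigma> * (real (2 * m))^2) > \<bar>c0\<bar> / K"
    using e exp_ge_add_one_self[of "aa * real m ^ 3 - \<sigma> * (real (2 * m))^2"] by linarith
  then have "exp (aa * real m ^ 3) / exp (\<sigma> * (real (2 * m))^2) > \<bar>c0\<bar> / K"
    by (simp add: exp_diff)
  then have "K * exp (aa * real m ^ 3) > \<bar>c0\<bar> * exp (\<sigma> * (real (2 * m))^2)"
    using K by (simp add: field_simps)
  moreover have "\<bar>c0\<bar> * exp (\<sigma> * (real (2 * m))^2) \<ge> c0 * exp (\<sigma> * (real (2 * m))^2)"
    by (intro mult_right_mono) auto
  ultimately show ?thesis by (intro exI[of _ m]) linarith
qed

lemma uu_in_smoothH: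
  assumes L: "L > 0"
  shows "uu L \<in> smoothH L"
  unfolding smoothH_def in_H_def
  using uu_smooth[OF L] fcoef1[of L] fcoef2[OF L]
  by (auto simp: forall_2 bb_def)

lemma uu_not_C:
  assumes L: "L > 0" and nu: "\<nu> > 0"
  shows "uu L \<notin> Cclass L \<nu> \<sigma>"
proof
  assume "uu L \<in> Cclass L \<nu> \<sigma>"
  then obtain c0 where c0: "\<And>\<alpha>. Apow_norm_sq L \<alpha> (uu L) / (\<nu>^2 * kappa0 L ^ (2 * \<alpha>))
        \<le> c0 * exp (\<sigma> * (real \<alpha>)^2)"
    unfolding Cclass_def by blast
  define K where "K = L^2 / (4 * \<nu>^2)"
  have K: "K > 0" using L nu by (simp add: K_def)
  obtain m :: nat where m: "K * exp (aa * real m ^ 3) > c0 * exp (\<sigma> * (real (2 * m))^2)"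
    using growth[OF K] by blast
  define c where "c = kappa0 L"
  have cpos: "c > 0" using L by (simp add: c_def kappa0_def)
  define n :: nat where "n = 2 ^ (m * m)"
  have "Apow_norm_sq L (2 * m) (uu L) \<ge> L^2 * ((c * real n) ^ (2 * (2 * m)) * (bb n / 2)^2)"
    using Apow_lower[OF L] unfolding c_def by blast
  also have "L^2 * ((c * real n) ^ (2 * (2 * m)) * (bb n / 2)^2)
      = (\<nu>^2 * c ^ (2 * (2 * m))) * (K * (real n ^ (2 * (2 * m)) * (bb n)^2))"
    using nu by (simp add: K_def power_mult_distrib field_simps)
  finally have "Apow_norm_sq L (2 * m) (uu L) / (\<nu>^2 * c ^ (2 * (2 * m))) \<ge> K * exp (aa * real m ^ 3)"
    using nu cpos key_identity[of m] unfolding n_def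
    by (simp add: pos_le_divide_eq mult.commute)
  with c0[of "2 * m"] m show False unfolding c_def by linarith
qed


theorem theorem10p1:
  fixes L \<nu> :: real
  assumes "L > 0" and "\<nu> > 0"
  shows "(\<Union>\<sigma>\<in>{0<..}. Cclass L \<nu> \<sigma>) \<subset> smoothH L"
proof -
  have sub: "(\<Union>\<sigma>\<in>{0<..}. Cclass L \<nu> \<sigma>) \<subseteq> smoothH L"
    by (auto simp: Cclass_def)
  have "uu L \<in> smoothH L" using uu_in_smoothH assms by blast
  moreover have "uu L \<notin> (\<Union>\<sigma>\<in>{0<..}. Cclass L \<nu> \<sigma>)" using uu_not_C assms by blast
  ultimately show ?thesis using sub by blast
qed

end
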